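(* Let $X$ be a compact metric space. Then $X$ is antipodal if and only if $\mathbf{E}(X)$ is convex as a subset of $C(X)$, the space of continuous real-valued functions on $X$.
   Context: A metric space $X$ is antipodal if for every $x\in X$ there exists $\bar x\in X$ with $d_X(x,\bar x)=d_X(x,y)+d_X(y,\bar x)$ for all $y\in X$. $\Delta(X)=\{f:X\to\mathbb{R}\text{ bounded}:f(x)+f(x')\ge d_X(x,x')\}$ and the tight span $\mathbf{E}(X)$ is the set of pointwise-minimal elements of $\Delta(X)$ (these are 1-Lipschitz, hence in $C(X)$). *)

theory Defs
  imports "HOL-Analysis.Analysis"
begin

text \<open>Real-valued functions on X are represented
  extensionally: functions 'a => real that vanish outside X.\<close>

definition antipodal :: "'a::metric_space set \<Rightarrow> bool" where
  "antipodal X \<longleftrightarrow>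
     (\<forall>x\<in>X. \<exists>x'\<in>X. \<forall>y\<in>X. dist x x' = dist x y + dist y x')"

definition Delta :: "'a::metric_space set \<Rightarrow> ('a \<Rightarrow> real) set" where
  "Delta X = {f. (\<forall>x. x \<notin> X \<longrightarrow> f x = 0) \<and> bounded (f ` X) \<and>
                 (\<forall>x\<in>X. \<forall>x'\<in>X. dist x x' \<le> f x + f x')}"

definition tight_span :: "'a::metric_space set \<Rightarrow> ('a \<Rightarrow> real) set" where
  "tight_span X = {f \<in> Delta X. \<forall>g\<in>Delta X. (\<forall>x\<in>X. g x \<le> f x) \<longrightarrow> (\<forall>x\<in>X. g x = f x)}"

definition convex_funs :: "('a \<Rightarrow> real) set \<Rightarrow> bool" where
  "convex_funs S \<longleftrightarrow>
     (\<forall>f\<in>S. \<forall>g\<in>S. \<forall>t::real. 0 \<le> t \<and> t \<le> 1 \<longrightarrow> (\<lambda>x. t * f x + (1 - t) * g x) \<in> S)"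

end

theory Submission
  imports Defs
begin

lemma Delta_nonneg:
  assumes "f \<in> Delta X" "x \<in> X" shows "0 \<le> f x"
proof -
  have "dist x x \<le> f x + f x" using assms unfolding Delta_def by blast
  then show ?thesis by simp
qed

lemma tight_lower:
  assumes fT: "f \<in> tight_span X" and a: "a \<in> X" and c: "0 \<le> c"
    and H: "\<forall>y\<in>X. dist a y \<le> c + f y"
  shows "f a \<le> c"
proof -
  have fD: "f \<in> Delta X" using fT unfolding tight_span_def by blast
  define g where "g = f(a := min (f a) c)"
  have fa0: "0 \<le> f a" using Delta_nonneg[OF fD a] .
  have "g \<in> Delta X"
    unfolding Delta_def
  proof (intro CollectI conjI allI impI ballI)
    fix x assume "x \<notin> X" then show "g x = 0" using fD a unfolding Delta_def g_def by auto
  next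
    have "g ` X \<subseteq> insert (min (f a) c) (f ` X)" unfolding g_def by auto
    moreover have "bounded (f ` X)" using fD unfolding Delta_def by blast
    ultimately show "bounded (g ` X)" by (meson bounded_insert bounded_subset)
  next
    fix x x' assume x: "x \<in> X" and x': "x' \<in> X"
    have D: "\<forall>x\<in>X. \<forall>x'\<in>X. dist x x' \<le> f x + f x'" using fD unfolding Delta_def by blast
    show "dist x x' \<le> g x + g x'"
    proof (cases "x = a")
      case True
      then show ?thesis
      proof (cases "x' = a")
        case True
        then show ?thesis using \<open>x = a\<close> fa0 c by (simp add: g_def)
      next
        case False
        have "dist a x' \<le> f a + f x'" "dist a x' \<le> c + f x'" using D H x' a by auto
        then show ?thesis using \<open>x = a\<close> False by (simp add: g_def)
      qed
    next
      case False
      then show ?thesis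
      proof (cases "x' = a")
        case True
        have "dist a x \<le> f a + f x" "dist a x \<le> c + f x" using D H x a by auto
        then show ?thesis using \<open>x \<noteq> a\<close> True by (simp add: g_def dist_commute)
      next
        case False
        then show ?thesis using \<open>x \<noteq> a\<close> D x x' by (auto simp: g_def)
      qed
    qed
  qed
  moreover have "\<forall>x\<in>X. g x \<le> f x" unfolding g_def by auto
  ultimately have "\<forall>x\<in>X. g x = f x" using fT unfolding tight_span_def by blast
  then have "g a = f a" using a by blast
  then show ?thesis unfolding g_def by simp
qed

lemma tight_lip:
  assumes fT: "f \<in> tight_span X" and a: "a \<in> X" and b: "b \<in> X"
  shows "f a \<le> f b + dist a b"
proof -
  have fD: "f \<in> Delta X" using fT unfolding tight_span_def by blast
  have D: "\<forall>x\<in>X. \<forall>x'\<in>X. dist x x' \<le> f x + f x'" using fD unfolding Delta_def by blast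
  show ?thesis
  proof (rule tight_lower[OF fT a])
    show "0 \<le> f b + dist a b" using Delta_nonneg[OF fD b] by simp
    show "\<forall>y\<in>X. dist a y \<le> f b + dist a b + f y"
    proof
      fix y assume "y \<in> X"
      have "dist a y \<le> dist a b + dist b y" by (rule dist_triangle)
      moreover have "dist b y \<le> f b + f y" using D b \<open>y \<in> X\<close> by blast
      ultimately show "dist a y \<le> f b + dist a b + f y" by linarith
    qed
  qed
qed

lemma tight_anti_eq:
  assumes fT: "f \<in> tight_span X" and x: "x \<in> X" and xb: "xb \<in> X"
    and A: "\<forall>y\<in>X. dist x xb = dist x y + dist y xb"
  shows "f x + f xb = dist x xb"
proof -
  have fD: "f \<in> Delta X" using fT unfolding tight_span_def by blast
  have D: "\<forall>x\<in>X. \<forall>x'\<in>X. dist x x' \<le> f x + f x'" using fD unfolding Delta_def by blast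
  define c where "c = max (dist x xb - f xb) 0"
  have "f x \<le> c"
  proof (rule tight_lower[OF fT x])
    show "0 \<le> c" unfolding c_def by simp
    show "\<forall>y\<in>X. dist x y \<le> c + f y"
    proof
      fix y assume y: "y \<in> X"
      have "f xb \<le> f y + dist xb y" using tight_lip[OF fT xb y] .
      moreover have "dist x xb = dist x y + dist y xb" using A y by blast
      ultimately have "dist x y \<le> dist x xb - f xb + f y" by (simp add: dist_commute)
      then show "dist x y \<le> c + f y" unfolding c_def by linarith
    qed
  qed
  moreover have "dist x xb \<le> f x + f xb" using D x xb by blast
  moreover have "f xb \<le> f x + dist xb x" using tight_lip[OF fT xb x] .
  moreover have "0 \<le> f x" using Delta_nonneg[OF fD x] .
  ultimately show ?thesis unfolding c_def by (auto simp: dist_commute split: if_splits)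
qed

lemma tight_if_anti:
  assumes fD: "f \<in> Delta X" and anti: "\<forall>x\<in>X. anti x \<in> X \<and> f x + f (anti x) = dist x (anti x)"
  shows "f \<in> tight_span X"
  unfolding tight_span_def
proof (intro CollectI conjI ballI impI fD)
  fix g x assume gD: "g \<in> Delta X" and le: "\<forall>x\<in>X. g x \<le> f x" and x: "x \<in> X"
  have "dist x (anti x) \<le> g x + g (anti x)" using gD x anti unfolding Delta_def by blast
  moreover have "g (anti x) \<le> f (anti x)" using le anti x by blast
  moreover have "f x + f (anti x) = dist x (anti x)" using anti x by blast
  moreover have "g x \<le> f x" using le x by blast
  ultimately show "g x = f x" by linarith
qed

lemma convex_Delta:
  assumes fD: "f \<in> Delta X" and gD: "g \<in> Delta X" and t: "0 \<le> t" "t \<le> 1"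
  shows "(\<lambda>x. t * f x + (1 - t) * g x) \<in> Delta X"
  unfolding Delta_def
proof (intro CollectI conjI allI impI ballI)
  fix x assume "x \<notin> X" then show "t * f x + (1 - t) * g x = 0" using fD gD unfolding Delta_def by auto
next
  obtain Bf where Bf: "\<forall>y\<in>f ` X. norm y \<le> Bf" using fD unfolding Delta_def bounded_iff by blast
  obtain Bg where Bg: "\<forall>y\<in>g ` X. norm y \<le> Bg" using gD unfolding Delta_def bounded_iff by blast
  show "bounded ((\<lambda>x. t * f x + (1 - t) * g x) ` X)"
    unfolding bounded_iff
  proof (intro exI[of _ "Bf + Bg"] ballI)
    fix y assume "y \<in> (\<lambda>x. t * f x + (1 - t) * g x) ` X"
    then obtain x where x: "x \<in> X" and y: "y = t * f x + (1 - t) * g x" by blast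
    have a1: "\<bar>f x\<bar> \<le> Bf" using Bf x by auto
    have a2: "\<bar>g x\<bar> \<le> Bg" using Bg x by auto
    have "\<bar>t * f x\<bar> \<le> \<bar>f x\<bar>" using t by (simp add: abs_mult mult_left_le_one_le)
    moreover have "\<bar>(1 - t) * g x\<bar> \<le> \<bar>g x\<bar>" using t by (simp add: abs_mult mult_left_le_one_le)
    ultimately show "norm y \<le> Bf + Bg" using a1 a2 y by simp
  qed
next
  fix x x' assume x: "x \<in> X" and x': "x' \<in> X"
  have "dist x x' \<le> f x + f x'" using fD x x' unfolding Delta_def by blast
  then have 1: "t * dist x x' \<le> t * (f x + f x')" using t by (simp add: mult_left_mono)
  have "dist x x' \<le> g x + g x'" using gD x x' unfolding Delta_def by blast
  then have 2: "(1 - t) * dist x x' \<le> (1 - t) * (g x + g x')" using t by (simp add: mult_left_mono)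
  have "dist x x' = t * dist x x' + (1 - t) * dist x x'" by algebra
  also have "\<dots> \<le> t * (f x + f x') + (1 - t) * (g x + g x')" using 1 2 by linarith
  also have "\<dots> = (t * f x + (1 - t) * g x) + (t * f x' + (1 - t) * g x')" by algebra
  finally show "dist x x' \<le> (t * f x + (1 - t) * g x) + (t * f x' + (1 - t) * g x')" .
qed

lemma dist_fun_tight:
  assumes X: "compact X" and z: "z \<in> X"
  shows "(\<lambda>y. if y \<in> X then dist z y else 0) \<in> tight_span X"
proof -
  define d where "d = (\<lambda>y. if y \<in> X then dist z y else 0)"
  have dD: "d \<in> Delta X"
    unfolding Delta_def
  proof (intro CollectI conjI allI impI ballI)
    fix x assume "x \<notin> X" then show "d x = 0" unfolding d_def by simp
  next
    have "compact (dist z ` X)"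
      by (rule compact_continuous_image[OF _ X]) (intro continuous_intros)
    then have "bounded (dist z ` X)" by (rule compact_imp_bounded)
    moreover have "d ` X = dist z ` X" unfolding d_def by auto
    ultimately show "bounded (d ` X)" by simp
  next
    fix x x' assume "x \<in> X" "x' \<in> X"
    then show "dist x x' \<le> d x + d x'" unfolding d_def
      using dist_triangle[of x x' z] by (simp add: dist_commute)
  qed
  have "d \<in> tight_span X"
    unfolding tight_span_def
  proof (intro CollectI conjI ballI impI dD)
    fix g x assume gD: "g \<in> Delta X" and le: "\<forall>x\<in>X. g x \<le> d x" and x: "x \<in> X"
    have "g z \<le> 0" using le z unfolding d_def by auto
    moreover have "0 \<le> g z" using Delta_nonneg[OF gD z] .
    ultimately have gz: "g z = 0" by simp
    have "dist z x \<le> g z + g x" using gD z x unfolding Delta_def by blast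
    then have "d x \<le> g x" using gz x unfolding d_def by simp
    then show "g x = d x" using le x by force
  qed
  then show ?thesis unfolding d_def .
qed

theorem proposition2p26:
  fixes X :: "'a::metric_space set"
  assumes "compact X"
  shows "antipodal X \<longleftrightarrow> convex_funs (tight_span X)"
proof
  assume "antipodal X"
  then have "\<forall>x\<in>X. \<exists>x'\<in>X. \<forall>y\<in>X. dist x x' = dist x y + dist y x'"
    unfolding antipodal_def .
  then obtain anti where anti: "\<forall>x\<in>X. anti x \<in> X \<and> (\<forall>y\<in>X. dist x (anti x) = dist x y + dist y (anti x))"
    by metis
  show "convex_funs (tight_span X)"
    unfolding convex_funs_def
  proof (intro ballI allI impI)
    fix f g and t :: real
    assume fT: "f \<in> tight_span X" and gT: "g \<in> tight_span X" and t: "0 \<le> t \<and> t \<le> 1"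
    have fD: "f \<in> Delta X" and gD: "g \<in> Delta X" using fT gT unfolding tight_span_def by auto
    show "(\<lambda>x. t * f x + (1 - t) * g x) \<in> tight_span X"
    proof (rule tight_if_anti[where anti=anti])
      show "(\<lambda>x. t * f x + (1 - t) * g x) \<in> Delta X" using convex_Delta[OF fD gD] t by blast
      show "\<forall>x\<in>X. anti x \<in> X \<and> t * f x + (1 - t) * g x + (t * f (anti x) + (1 - t) * g (anti x)) = dist x (anti x)"
      proof
        fix x assume x: "x \<in> X"
        have ax: "anti x \<in> X" and A: "\<forall>y\<in>X. dist x (anti x) = dist x y + dist y (anti x)" using anti x by auto
        have e1: "f x + f (anti x) = dist x (anti x)" using tight_anti_eq[OF fT x ax A] .
        have e2: "g x + g (anti x) = dist x (anti x)" using tight_anti_eq[OF gT x ax A] .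
        have "t * f x + (1 - t) * g x + (t * f (anti x) + (1 - t) * g (anti x))
            = t * (f x + f (anti x)) + (1 - t) * (g x + g (anti x))" by algebra
        also have "\<dots> = dist x (anti x)" using e1 e2 by (simp add: algebra_simps)
        finally show "anti x \<in> X \<and> t * f x + (1 - t) * g x + (t * f (anti x) + (1 - t) * g (anti x)) = dist x (anti x)"
          using ax by simp
      qed
    qed
  qed
next
  assume conv: "convex_funs (tight_span X)"
  show "antipodal X"
    unfolding antipodal_def
  proof
    fix w assume w: "w \<in> X"
    define dx where "dx = (\<lambda>z y. if y \<in> X then dist z y else (0::real))"
    have dxT: "\<forall>z\<in>X. dx z \<in> tight_span X" unfolding dx_def using dist_fun_tight[OF assms] by blast
    have "\<exists>m\<in>X. \<forall>y\<in>X. dist w y \<le> dist w m"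
      by (rule continuous_attains_sup[OF assms]) (use w in \<open>auto intro!: continuous_intros\<close>)
    then obtain m where m: "m \<in> X" and mmax: "\<forall>y\<in>X. dist w y \<le> dist w m" by blast
    show "\<exists>x'\<in>X. \<forall>y\<in>X. dist w x' = dist w y + dist y x'"
    proof (intro bexI[of _ m] ballI m)
      fix z assume z: "z \<in> X"
      define h where "h = (\<lambda>y. 1/2 * dx m y + (1 - 1/2) * dx z y)"
      have hT: "h \<in> tight_span X" 
      proof -
        have "\<forall>t::real. 0 \<le> t \<and> t \<le> 1 \<longrightarrow> (\<lambda>x. t * dx m x + (1 - t) * dx z x) \<in> tight_span X"
          using conv dxT m z unfolding convex_funs_def by blast
        from spec[OF this, of "1/2"] show ?thesis unfolding h_def by simp
      qed
      have hD: "h \<in> Delta X" using hT unfolding tight_span_def by blast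
      have hX: "\<And>y. y \<in> X \<Longrightarrow> h y = (dist m y + dist z y) / 2" unfolding h_def dx_def by simp
      define phi where "phi = (\<lambda>y. h w + h y - dist w y)"
      have "continuous_on X (\<lambda>y. h w + (dist m y + dist z y) / 2 - dist w y)"
        by (intro continuous_intros) auto
      then have cont: "continuous_on X phi"
        by (rule continuous_on_cong[THEN iffD1, rotated 2]) (auto simp: phi_def hX)
      have "\<exists>y0\<in>X. \<forall>y\<in>X. phi y0 \<le> phi y"
        by (rule continuous_attains_inf[OF assms _ cont]) (use w in auto)
      then obtain y0 where y0: "y0 \<in> X" and ymin: "\<forall>y\<in>X. phi y0 \<le> phi y" by blast
      have pge: "\<forall>y\<in>X. 0 \<le> phi y" using hD w unfolding Delta_def phi_def by auto
      have "phi y0 = 0"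
      proof (rule ccontr)
        assume "phi y0 \<noteq> 0"
        then have pos: "0 < phi y0" using pge y0 by force
        define c where "c = max (h w - phi y0) 0"
        have "h w \<le> c"
        proof (rule tight_lower[OF hT w])
          show "0 \<le> c" unfolding c_def by simp
          show "\<forall>y\<in>X. dist w y \<le> c + h y"
          proof
            fix y assume "y \<in> X"
            then have "phi y0 \<le> phi y" using ymin by blast
            then show "dist w y \<le> c + h y" unfolding phi_def c_def by linarith
          qed
        qed
        then have "h w \<le> 0" using pos unfolding c_def by linarith
        then have "phi w \<le> 0" unfolding phi_def by simp
        then show False using ymin w pos by force
      qed
      then have eq: "(dist m w + dist z w) / 2 + (dist m y0 + dist z y0) / 2 = dist w y0"
        unfolding phi_def using hX w y0 by simp
      have t1: "dist w y0 \<le> dist w m + dist m y0" by (rule dist_triangle)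
      have t2: "dist w y0 \<le> dist w z + dist z y0" by (rule dist_triangle)
      have eq2: "dist w m + dist w z + dist m y0 + dist z y0 = 2 * dist w y0"
        using eq dist_commute[of m w] dist_commute[of z w] by (simp add: field_simps)
      have e1: "dist w y0 = dist w m + dist m y0"
        using eq2 t1 t2 by linarith
      have e2: "dist w y0 = dist w z + dist z y0"
        using eq2 t1 t2 by linarith
      have "dist w y0 \<le> dist w m" using mmax y0 by blast
      then have "dist m y0 = 0" using e1 by simp
      then have "y0 = m" by simp
      then show "dist w m = dist w z + dist z m" using e2 by simp
    qed
  qed
qed

end
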